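(* Every interval graph admits a canonical dominating set.
   Context: A graph $G$ is an interval graph if there are closed intervals $I_v$, $v\in V(G)$, with $uv\in E(G)$ iff $I_u\cap I_v\ne\emptyset$. A set $D\subseteq V(G)$ is a dominating set if every vertex of $G$ is in $D$ or adjacent to a vertex of $D$. Two dominating sets $D,D'$ are adjacent if $|D\triangle D'|=1$. For dominating sets $D_p,D_q$ and an integer $k>0$, write $D_p\leftrightarrow_k D_q$ if there is a sequence $D_0=D_p,\dots,D_\ell=D_q$ ($\ell\ge0$) of dominating sets of $G$ with consecutive sets adjacent and $|D_i|\le k$ for all $i$. A minimum dominating set $D^*$ of $G$ is canonical if $D\leftrightarrow_{|D|+1} D^*$ for every dominating set $D$ of $G$. *)

theory Defs
  imports Complex_Main
begin

definition interval_graph :: "'a set \<Rightarrow> ('a \<Rightarrow> 'a \<Rightarrow> bool) \<Rightarrow> bool" where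
  "interval_graph V E \<longleftrightarrow>
     finite V \<and> (\<forall>u v. E u v \<longrightarrow> u \<in> V \<and> v \<in> V) \<and> (\<forall>v. \<not> E v v) \<and>
     (\<exists>lo hi :: 'a \<Rightarrow> real. (\<forall>v\<in>V. lo v \<le> hi v) \<and>
        (\<forall>u\<in>V. \<forall>v\<in>V. u \<noteq> v \<longrightarrow>
           (E u v \<longleftrightarrow> {lo u..hi u} \<inter> {lo v..hi v} \<noteq> {})))"

definition dominating_set :: "'a set \<Rightarrow> ('a \<Rightarrow> 'a \<Rightarrow> bool) \<Rightarrow> 'a set \<Rightarrow> bool" where
  "dominating_set V E D \<longleftrightarrow> D \<subseteq> V \<and> (\<forall>v\<in>V. v \<in> D \<or> (\<exists>u\<in>D. E v u))"

definition min_dominating_set :: "'a set \<Rightarrow> ('a \<Rightarrow> 'a \<Rightarrow> bool) \<Rightarrow> 'a set \<Rightarrow> bool" where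
  "min_dominating_set V E D \<longleftrightarrow> dominating_set V E D \<and>
     (\<forall>D'. dominating_set V E D' \<longrightarrow> card D \<le> card D')"

definition ds_adjacent :: "'a set \<Rightarrow> 'a set \<Rightarrow> bool" where
  "ds_adjacent D D' \<longleftrightarrow> card ((D - D') \<union> (D' - D)) = 1"

definition reconf :: "'a set \<Rightarrow> ('a \<Rightarrow> 'a \<Rightarrow> bool) \<Rightarrow> nat \<Rightarrow> 'a set \<Rightarrow> 'a set \<Rightarrow> bool" where
  "reconf V E k Dp Dq \<longleftrightarrow>
     (\<exists>xs. xs \<noteq> [] \<and> hd xs = Dp \<and> last xs = Dq \<and>
        (\<forall>D\<in>set xs. dominating_set V E D \<and> card D \<le> k) \<and>
        (\<forall>i. Suc i < length xs \<longrightarrow> ds_adjacent (xs ! i) (xs ! Suc i)))"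

definition canonical_dominating_set :: "'a set \<Rightarrow> ('a \<Rightarrow> 'a \<Rightarrow> bool) \<Rightarrow> 'a set \<Rightarrow> bool" where
  "canonical_dominating_set V E Ds \<longleftrightarrow> min_dominating_set V E Ds \<and>
     (\<forall>D. dominating_set V E D \<longrightarrow> reconf V E (card D + 1) D Ds)"

end

theory Submission
  imports Defs
begin

lemma dom_mono: "dominating_set V E D \<Longrightarrow> D \<subseteq> D' \<Longrightarrow> D' \<subseteq> V \<Longrightarrow> dominating_set V E D'"
  unfolding dominating_set_def by blast

lemma reconf_refl: "dominating_set V E D \<Longrightarrow> card D \<le> k \<Longrightarrow> reconf V E k D D"
  unfolding reconf_def by (rule exI[of _ "[D]"]) auto

lemma reconf_mono: "reconf V E k D D' \<Longrightarrow> k \<le> k' \<Longrightarrow> reconf V E k' D D'"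
  unfolding reconf_def
  apply (elim exE conjE)
  subgoal for xs by (rule exI[of _ xs]) (auto intro: order_trans)
  done

lemma reconf_cons:
  assumes "dominating_set V E D" "card D \<le> k" "ds_adjacent D D'" "reconf V E k D' Dq"
  shows "reconf V E k D Dq"
proof -
  obtain xs where xs: "xs \<noteq> []" "hd xs = D'" "last xs = Dq"
    "\<forall>D\<in>set xs. dominating_set V E D \<and> card D \<le> k"
    "\<forall>i. Suc i < length xs \<longrightarrow> ds_adjacent (xs ! i) (xs ! Suc i)"
    using assms(4) unfolding reconf_def by blast
  have "\<forall>i. Suc i < length (D # xs) \<longrightarrow> ds_adjacent ((D#xs) ! i) ((D#xs) ! Suc i)"
  proof (intro allI impI)
    fix i assume "Suc i < length (D # xs)"
    then show "ds_adjacent ((D#xs) ! i) ((D#xs) ! Suc i)"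
      using xs assms(3) by (cases i) (auto simp: hd_conv_nth)
  qed
  then show ?thesis unfolding reconf_def
    using xs assms by (intro exI[of _ "D # xs"]) auto
qed

lemma adj_remove: "x \<in> D \<Longrightarrow> ds_adjacent D (D - {x})"
proof -
  assume "x \<in> D"
  then have "(D - (D - {x})) \<union> ((D - {x}) - D) = {x}" by blast
  then show ?thesis unfolding ds_adjacent_def by simp
qed

lemma adj_insert: "g \<notin> D \<Longrightarrow> ds_adjacent D (insert g D)"
proof -
  assume "g \<notin> D"
  then have "(D - insert g D) \<union> (insert g D - D) = {g}" by blast
  then show ?thesis unfolding ds_adjacent_def by simp
qed

lemma ivl_int: "(a::real) \<le> b \<Longrightarrow> c \<le> d \<Longrightarrow> ({a..b} \<inter> {c..d} \<noteq> {}) \<longleftrightarrow> (a \<le> d \<and> c \<le> b)"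
proof
  assume "a \<le> b" "c \<le> d" "{a..b} \<inter> {c..d} \<noteq> {}"
  then obtain t where "t \<in> {a..b}" "t \<in> {c..d}" by blast
  then show "a \<le> d \<and> c \<le> b" by auto
next
  assume "a \<le> b" "c \<le> d" "a \<le> d \<and> c \<le> b"
  then have "max a c \<in> {a..b} \<inter> {c..d}" by auto
  then show "{a..b} \<inter> {c..d} \<noteq> {}" by blast
qed

locale ig =
  fixes V :: "'a set" and E :: "'a \<Rightarrow> 'a \<Rightarrow> bool" and lo hi :: "'a \<Rightarrow> real"
  assumes fin: "finite V" and Ev: "\<forall>u v. E u v \<longrightarrow> u \<in> V \<and> v \<in> V"
    and irr: "\<forall>v. \<not> E v v" and lohi: "\<forall>v\<in>V. lo v \<le> hi v"
    and adj: "\<forall>u\<in>V. \<forall>v\<in>V. u \<noteq> v \<longrightarrow> (E u v \<longleftrightarrow> {lo u..hi u} \<inter> {lo v..hi v} \<noteq> {})"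
begin

lemma closed_iff: "v \<in> V \<Longrightarrow> u \<in> V \<Longrightarrow> (v = u \<or> E v u) \<longleftrightarrow> (lo v \<le> hi u \<and> lo u \<le> hi v)"
proof (cases "v = u")
  case True
  assume "v \<in> V" "u \<in> V" then show ?thesis using True lohi by auto
next
  case False
  assume "v \<in> V" "u \<in> V"
  then have 1: "E v u \<longleftrightarrow> {lo v..hi v} \<inter> {lo u..hi u} \<noteq> {}" using False adj by blast
  have "lo v \<le> hi v" "lo u \<le> hi u" using lohi \<open>v \<in> V\<close> \<open>u \<in> V\<close> by auto
  then have "({lo v..hi v} \<inter> {lo u..hi u} \<noteq> {}) \<longleftrightarrow> (lo v \<le> hi u \<and> lo u \<le> hi v)"
    by (rule ivl_int)
  then show ?thesis using 1 False by simp
qed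

lemma dom_iff: "dominating_set V E D \<longleftrightarrow> D \<subseteq> V \<and> (\<forall>v\<in>V. \<exists>u\<in>D. lo v \<le> hi u \<and> lo u \<le> hi v)"
proof
  assume d: "dominating_set V E D"
  then have DV: "D \<subseteq> V" unfolding dominating_set_def by blast
  show "D \<subseteq> V \<and> (\<forall>v\<in>V. \<exists>u\<in>D. lo v \<le> hi u \<and> lo u \<le> hi v)"
  proof (intro conjI ballI DV)
    fix v assume v: "v \<in> V"
    then obtain u where "u \<in> D" "v = u \<or> E v u" using d unfolding dominating_set_def by blast
    then show "\<exists>u\<in>D. lo v \<le> hi u \<and> lo u \<le> hi v" using closed_iff[OF v] DV by blast
  qed
next
  assume h: "D \<subseteq> V \<and> (\<forall>v\<in>V. \<exists>u\<in>D. lo v \<le> hi u \<and> lo u \<le> hi v)"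
  show "dominating_set V E D" unfolding dominating_set_def
  proof (intro conjI ballI)
    show "D \<subseteq> V" using h by blast
  next
    fix v assume v: "v \<in> V"
    then obtain u where "u \<in> D" "lo v \<le> hi u \<and> lo u \<le> hi v" using h by blast
    then show "v \<in> D \<or> (\<exists>u\<in>D. E v u)" using closed_iff[OF v, of u] h by blast
  qed
qed

lemma exists_min: "\<exists>D. min_dominating_set V E D"
proof -
  have "dominating_set V E V" unfolding dominating_set_def by blast
  from ex_has_least_nat[of "dominating_set V E" V card, OF this]
  show ?thesis unfolding min_dominating_set_def by blast
qed

lemma swap:
  assumes dsmin: "min_dominating_set V E Ds"
    and dsmax: "\<forall>D'. min_dominating_set V E D' \<longrightarrow> sum hi D' \<le> sum hi Ds"
    and dD: "dominating_set V E D" and nsub: "\<not> Ds \<subseteq> D"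
  shows "\<exists>g x. g \<in> Ds \<and> g \<notin> D \<and> x \<in> D \<and> x \<notin> Ds \<and> dominating_set V E (insert g D - {x})"
proof -
  define A where "A = D \<inter> Ds"
  have Dsdom: "dominating_set V E Ds" using dsmin unfolding min_dominating_set_def by blast
  have DsV: "Ds \<subseteq> V" using Dsdom unfolding dominating_set_def by blast
  have Dsd: "\<forall>v\<in>V. \<exists>u\<in>Ds. lo v \<le> hi u \<and> lo u \<le> hi v" using Dsdom by (simp add: dom_iff)
  have Dd: "\<forall>v\<in>V. \<exists>u\<in>D. lo v \<le> hi u \<and> lo u \<le> hi v" using dD by (simp add: dom_iff)
  have DV: "D \<subseteq> V" using dD unfolding dominating_set_def by blast
  have finDs: "finite Ds" using DsV fin finite_subset by blast
  have finD: "finite D" using DV fin finite_subset by blast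
  have "A \<subset> Ds" using nsub unfolding A_def by blast
  then have "card A < card Ds" using finDs psubset_card_mono by blast
  then have "\<not> dominating_set V E A" using dsmin unfolding min_dominating_set_def by force
  moreover have "A \<subseteq> V" using DV A_def by blast
  ultimately have "\<exists>v\<in>V. \<forall>a\<in>A. \<not> (lo v \<le> hi a \<and> lo a \<le> hi v)" by (simp add: dom_iff)
  define U where "U = {v\<in>V. \<forall>a\<in>A. \<not> (lo v \<le> hi a \<and> lo a \<le> hi v)}"
  have Une: "U \<noteq> {}" unfolding U_def using \<open>\<exists>v\<in>V. _\<close> by blast
  have Ufin: "finite U" unfolding U_def using fin by simp
  have "Min (hi ` U) \<in> hi ` U" using Une Ufin by (intro Min_in) auto
  then obtain u where uU: "u \<in> U" and uh: "hi u = Min (hi ` U)" by auto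
  have umin: "\<And>w. w \<in> U \<Longrightarrow> hi u \<le> hi w" using uh Ufin by simp
  have uV: "u \<in> V" using uU U_def by blast
  define G where "G = {g\<in>Ds. lo u \<le> hi g \<and> lo g \<le> hi u}"
  have Gne: "G \<noteq> {}" using Dsd uV unfolding G_def by blast
  have Gfin: "finite G" using finDs G_def by simp
  have "Max (hi ` G) \<in> hi ` G" using Gne Gfin by (intro Max_in) auto
  then obtain g where gG: "g \<in> G" and gh: "hi g = Max (hi ` G)" by auto
  have gmaxG: "\<And>y. y \<in> G \<Longrightarrow> hi y \<le> hi g" using gh Gfin by simp
  have gDs: "g \<in> Ds" and ug: "lo u \<le> hi g" "lo g \<le> hi u" using gG G_def by auto
  have gnD: "g \<notin> D" using uU gDs ug unfolding U_def A_def by blast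
  have gV: "g \<in> V" using gDs DsV by blast
  have gmax: "\<forall>y\<in>V. lo u \<le> hi y \<and> lo y \<le> hi u \<longrightarrow> hi y \<le> hi g"
  proof (rule ccontr)
    assume "\<not> ?thesis"
    then obtain y where yV: "y \<in> V" and uy: "lo u \<le> hi y" "lo y \<le> hi u" and yg: "hi g < hi y"
      by force
    have ynDs: "y \<notin> Ds"
    proof
      assume "y \<in> Ds" then have "y \<in> G" using uy G_def by blast
      then show False using gmaxG yg by force
    qed
    define D' where "D' = insert y (Ds - {g})"
    have D'dom: "dominating_set V E D'" unfolding dom_iff
    proof (intro conjI ballI)
      show "D' \<subseteq> V" using DsV yV D'_def by blast
    next
      fix w assume wV: "w \<in> V"
      then obtain a where aDs: "a \<in> Ds" and wa: "lo w \<le> hi a" "lo a \<le> hi w"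
        using Dsd by blast
      show "\<exists>u\<in>D'. lo w \<le> hi u \<and> lo u \<le> hi w"
      proof (cases "a = g")
        case False then show ?thesis using aDs wa D'_def by blast
      next
        case True
        show ?thesis
        proof (cases "\<exists>a'\<in>Ds - {g}. lo w \<le> hi a' \<and> lo a' \<le> hi w")
          case True then show ?thesis using D'_def by blast
        next
          case False
          then have "w \<in> U" using wV gnD unfolding U_def A_def by blast
          then have "hi u \<le> hi w" by (rule umin)
          then have "lo w \<le> hi y \<and> lo y \<le> hi w" using True wa yg uy by (simp only:) linarith
          then show ?thesis using D'_def by blast
        qed
      qed
    qed
    have "card D' = card Ds"
      using finDs ynDs gDs unfolding D'_def
      by (simp add: card_Diff_singleton) (metis card_gt_0_iff Suc_pred empty_iff)
    then have "min_dominating_set V E D'" using D'dom dsmin unfolding min_dominating_set_def by simp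
    then have le: "sum hi D' \<le> sum hi Ds" using dsmax by blast
    have "sum hi D' = hi y + (sum hi Ds - hi g)"
      unfolding D'_def using finDs ynDs gDs by (simp add: sum_diff1)
    then show False using le yg by linarith
  qed
  obtain x where xD: "x \<in> D" and ux: "lo u \<le> hi x" "lo x \<le> hi u" using Dd uV by blast
  have xnDs: "x \<notin> Ds" using uU xD ux unfolding U_def A_def by blast
  have xV: "x \<in> V" using xD DV by blast
  have xg: "hi x \<le> hi g" using gmax xV ux by blast
  have "dominating_set V E (insert g D - {x})" unfolding dom_iff
  proof (intro conjI ballI)
    show "insert g D - {x} \<subseteq> V" using DV gV by blast
  next
    fix w assume wV: "w \<in> V"
    then obtain a where aD: "a \<in> D" and wa: "lo w \<le> hi a" "lo a \<le> hi w"
      using Dd by blast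
    show "\<exists>u\<in>insert g D - {x}. lo w \<le> hi u \<and> lo u \<le> hi w"
    proof (cases "a = x")
      case False then show ?thesis using aD wa by blast
    next
      case True
      show ?thesis
      proof (cases "\<exists>a'\<in>D - {x}. lo w \<le> hi a' \<and> lo a' \<le> hi w")
        case True then show ?thesis by blast
      next
        case False
        then have "w \<in> U" using wV xnDs unfolding U_def A_def by blast
        then have "hi u \<le> hi w" by (rule umin)
        then have "lo w \<le> hi g \<and> lo g \<le> hi w" using True wa xg ug by (simp only:) linarith
        moreover have "g \<noteq> x" using gnD xD by blast
        ultimately show ?thesis by blast
      qed
    qed
  qed
  then show ?thesis using gDs gnD xD xnDs by blast
qed

lemma main:
  assumes dsmin: "min_dominating_set V E Ds"
    and dsmax: "\<forall>D'. min_dominating_set V E D' \<longrightarrow> sum hi D' \<le> sum hi Ds"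
  shows "dominating_set V E D \<Longrightarrow> reconf V E (card D + 1) D Ds \<and> card Ds \<le> card D"
proof (induction "card D + card (D - Ds)" arbitrary: D rule: less_induct)
  case less
  have Dsdom: "dominating_set V E Ds" using dsmin unfolding min_dominating_set_def by blast
  have DV: "D \<subseteq> V" using less.prems unfolding dominating_set_def by blast
  have finD: "finite D" using DV fin finite_subset by blast
  consider "D = Ds" | "Ds \<subseteq> D" "D \<noteq> Ds" | "\<not> Ds \<subseteq> D" by blast
  then show ?case
  proof cases
    case 1 then show ?thesis using reconf_refl[OF Dsdom, of "card Ds + 1"] by simp
  next
    case 2
    then obtain x where xD: "x \<in> D" and xnDs: "x \<notin> Ds" by blast
    define D' where "D' = D - {x}"
    have D'dom: "dominating_set V E D'"
      by (rule dom_mono[OF Dsdom]) (use 2 xnDs DV in \<open>auto simp: D'_def\<close>)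
    have c1: "card D' < card D" unfolding D'_def by (rule card_Diff1_less[OF finD xD])
    have "finite (D - Ds)" using finD by simp
    moreover have "D' - Ds \<subseteq> D - Ds" unfolding D'_def by blast
    ultimately have c2: "card (D' - Ds) \<le> card (D - Ds)" by (rule card_mono)
    have IH: "reconf V E (card D' + 1) D' Ds \<and> card Ds \<le> card D'"
      using c1 c2 by (intro less.hyps[OF _ D'dom]) linarith
    have "reconf V E (card D + 1) D' Ds" using IH c1 reconf_mono[of V E "card D' + 1" D' Ds "card D + 1"] by simp
    then have "reconf V E (card D + 1) D Ds"
      using reconf_cons[OF less.prems _ adj_remove[OF xD]] unfolding D'_def by simp
    then show ?thesis using IH c1 by simp
  next
    case 3
    obtain g x where gx: "g \<in> Ds" "g \<notin> D" "x \<in> D" "x \<notin> Ds"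
      and d2: "dominating_set V E (insert g D - {x})"
      using swap[OF dsmin dsmax less.prems 3] by blast
    define D1 where "D1 = insert g D"
    define D2 where "D2 = D1 - {x}"
    have gV: "g \<in> V" using gx Dsdom unfolding dominating_set_def by blast
    have d1: "dominating_set V E D1" by (rule dom_mono[OF less.prems]) (use gV DV in \<open>auto simp: D1_def\<close>)
    have cD1: "card D1 = card D + 1" unfolding D1_def using finD gx by simp
    have xD1: "x \<in> D1" unfolding D1_def using gx by blast
    have finD1: "finite D1" unfolding D1_def using finD by simp
    have cD2: "card D2 = card D" unfolding D2_def using cD1 xD1 finD1 by simp
    have "D2 - Ds = (D - Ds) - {x}" unfolding D2_def D1_def using gx by blast
    moreover have "card ((D - Ds) - {x}) < card (D - Ds)"
      using finD gx by (intro card_Diff1_less) auto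
    ultimately have "card (D2 - Ds) < card (D - Ds)" by simp
    moreover have d2': "dominating_set V E D2" using d2 unfolding D2_def D1_def .
    ultimately have IH: "reconf V E (card D2 + 1) D2 Ds \<and> card Ds \<le> card D2"
      using cD2 by (intro less.hyps[OF _ d2']) linarith
    have "reconf V E (card D + 1) D1 Ds"
      using reconf_cons[OF d1 _ adj_remove[OF xD1]] IH cD1 cD2 unfolding D2_def by simp
    then have "reconf V E (card D + 1) D Ds"
      using reconf_cons[OF less.prems _ adj_insert[OF gx(2)]] unfolding D1_def by simp
    then show ?thesis using IH cD2 by simp
  qed
qed

lemma canonical_exists: "\<exists>Ds. canonical_dominating_set V E Ds"
proof -
  define M where "M = {D. min_dominating_set V E D}"
  have "M \<subseteq> Pow V"
  proof
    fix D assume "D \<in> M"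
    then have "dominating_set V E D" unfolding M_def min_dominating_set_def by simp
    then show "D \<in> Pow V" unfolding dominating_set_def by simp
  qed
  moreover have "finite (Pow V)" using fin by simp
  ultimately have Mfin: "finite M" by (rule finite_subset)
  obtain D0 where "min_dominating_set V E D0" using exists_min by (elim exE)
  then have "D0 \<in> M" unfolding M_def by simp
  then have Mne: "sum hi ` M \<noteq> {}" by (simp add: image_iff) blast
  have "Max (sum hi ` M) \<in> sum hi ` M" by (rule Max_in[OF finite_imageI[OF Mfin] Mne])
  then obtain Ds where Dsh': "Max (sum hi ` M) = sum hi Ds" and DsM: "Ds \<in> M" by (rule imageE)
  note Dsh = Dsh'[symmetric]
  have dsmax: "\<forall>D'. min_dominating_set V E D' \<longrightarrow> sum hi D' \<le> sum hi Ds"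
  proof (intro allI impI)
    fix D' assume "min_dominating_set V E D'"
    then have "D' \<in> M" unfolding M_def by simp
    then have "sum hi D' \<in> sum hi ` M" by (rule imageI)
    then show "sum hi D' \<le> sum hi Ds" unfolding Dsh by (rule Max_ge[OF finite_imageI[OF Mfin]])
  qed
  have dsmin: "min_dominating_set V E Ds" using DsM unfolding M_def by simp
  have "canonical_dominating_set V E Ds" unfolding canonical_dominating_set_def
  proof (intro conjI allI impI dsmin)
    fix D assume "dominating_set V E D"
    then show "reconf V E (card D + 1) D Ds" using main[OF dsmin dsmax] by simp
  qed
  then show ?thesis ..
qed

end

theorem lemma11:
  fixes V :: "'a set" and E :: "'a \<Rightarrow> 'a \<Rightarrow> bool"
  assumes "interval_graph V E"
  shows "\<exists>Ds. canonical_dominating_set V E Ds"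
proof -
  obtain lo hi :: "'a \<Rightarrow> real" where
    h: "finite V" "\<forall>u v. E u v \<longrightarrow> u \<in> V \<and> v \<in> V" "\<forall>v. \<not> E v v"
      "\<forall>v\<in>V. lo v \<le> hi v"
      "\<forall>u\<in>V. \<forall>v\<in>V. u \<noteq> v \<longrightarrow> (E u v \<longleftrightarrow> {lo u..hi u} \<inter> {lo v..hi v} \<noteq> {})"
    using assms unfolding interval_graph_def by (elim conjE exE) (rule that, assumption+)
  have "ig V E lo hi" unfolding ig_def using h by (intro conjI)
  then show ?thesis by (rule ig.canonical_exists)
qed

end
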